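(* Let $S$ be a monoid, $I, J$ sets and $P$ a $J\times I$ matrix, and let $M$ be either $M(S; I, J; P)$ (entries of $P$ in $S$) or $M^0(S; I, J; P)$ (entries of $P$ in $S \cup \{0\}$), and suppose $M$ is finitely generated. If some entry of $P$ is a unit of $S$, then there exist finite choices of generators $\sigma$ for $S$ and $\tau$ for $M$ and a regular language $R$ such that $L_\sigma(S) = L_\tau(M) \cap R$.
   Context: The Rees matrix semigroup with zero $M^0(S; I, J; P)$ (where $0 \notin S$) has elements $(I \times S \times J) \cup \{0\}$, $0$ is a zero, and $(i_1, g_1, j_1)(i_2, g_2, j_2) = (i_1, g_1 P_{j_1 i_2} g_2, j_2)$ if $P_{j_1 i_2} \in S$ and $=0$ if $P_{j_1 i_2} = 0$. If $P$ has no zero entries, $M(S;I,J;P)$ is the subsemigroup $I \times S \times J$. A unit of a monoid $S$ with identity $1$ is $g$ with $gh = hg = 1$ for some $h \in S$. For a semigroup $S$, $S^1$ denotes the monoid obtained by adjoining a new identity $1$ (even if $S$ already has one). A choice of generators for $S$ is a surjective morphism $\sigma : X^+ \to S$ from a free semigroup, finite if $X$ is finite; it extends uniquely to $\sigma^1 : X^* \to S^1$. Let $\overline{X} = \{\overline{x} : x \in X\}$ be a set of formal inverses, $\hat{X} = X \cup \overline{X}$. The loop automaton of $S$ with respect to $\sigma$ is the directed labelled graph with vertex set $S^1$, having for each $a \in S^1$ and $x \in X$ an edge from $a$ to $a(x\sigma)$ labelled $x$ and an edge from $a(x\sigma)$ to $a$ labelled $\overline{x}$. The loop problem $L_\sigma(S)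 \subseteq \hat{X}^*$ is the set of words labelling paths from $1$ to $1$ in this graph (including the empty word). *)

theory Defs
  imports "HOL-Algebra.Group"
begin

inductive_set sgen :: "('e \<Rightarrow> 'e \<Rightarrow> 'e) \<Rightarrow> 'e set \<Rightarrow> 'e set"
  for mul :: "'e \<Rightarrow> 'e \<Rightarrow> 'e" and A :: "'e set" where
  base: "a \<in> A \<Longrightarrow> a \<in> sgen mul A"
| step: "a \<in> sgen mul A \<Longrightarrow> b \<in> sgen mul A \<Longrightarrow> mul a b \<in> sgen mul A"

definition fin_gen :: "'e set \<Rightarrow> ('e \<Rightarrow> 'e \<Rightarrow> 'e) \<Rightarrow> bool" where
  "fin_gen C mul \<longleftrightarrow> (\<exists>A. finite A \<and> A \<subseteq> C \<and> sgen mul A = C)"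

text \<open>A finite choice of generators: a surjective morphism from the free semigroup X^+
  onto the semigroup is determined by the images g x of the letters x in X;
  it is surjective iff the images generate the semigroup.\<close>
definition fin_choice :: "'e set \<Rightarrow> ('e \<Rightarrow> 'e \<Rightarrow> 'e) \<Rightarrow> nat set \<Rightarrow> (nat \<Rightarrow> 'e) \<Rightarrow> bool" where
  "fin_choice C mul X g \<longleftrightarrow> finite X \<and> g ` X \<subseteq> C \<and> sgen mul (g ` X) = C"

text \<open>Letters of hat X: Inl x is x, Inr x is the formal inverse bar x.
  Vertices of the loop automaton are elements of S^1, represented as 'e option,
  where None is the newly adjoined identity.\<close>

definition mult1 :: "('e \<Rightarrow> 'e \<Rightarrow> 'e) \<Rightarrow> 'e option \<Rightarrow> 'e \<Rightarrow> 'e option" where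
  "mult1 mul a s = (case a of None \<Rightarrow> Some s | Some b \<Rightarrow> Some (mul b s))"

definition vert :: "'e set \<Rightarrow> 'e option set" where
  "vert C = Some ` C \<union> {None}"

inductive lpath :: "'e set \<Rightarrow> ('e \<Rightarrow> 'e \<Rightarrow> 'e) \<Rightarrow> nat set \<Rightarrow> (nat \<Rightarrow> 'e)
    \<Rightarrow> 'e option \<Rightarrow> (nat + nat) list \<Rightarrow> 'e option \<Rightarrow> bool"
  for C mul X g where
  nil: "a \<in> vert C \<Longrightarrow> lpath C mul X g a [] a"
| fwd: "x \<in> X \<Longrightarrow> a \<in> vert C \<Longrightarrow> lpath C mul X g (mult1 mul a (g x)) w b
        \<Longrightarrow> lpath C mul X g a (Inl x # w) b"
| bwd: "x \<in> X \<Longrightarrow> a \<in> vert C \<Longrightarrow> lpath C mul X g a w b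
        \<Longrightarrow> lpath C mul X g (mult1 mul a (g x)) (Inr x # w) b"

definition loop_problem :: "'e set \<Rightarrow> ('e \<Rightarrow> 'e \<Rightarrow> 'e) \<Rightarrow> nat set \<Rightarrow> (nat \<Rightarrow> 'e)
    \<Rightarrow> (nat + nat) list set" where
  "loop_problem C mul X g = {w. lpath C mul X g None w None}"

definition hat :: "nat set \<Rightarrow> (nat + nat) set" where
  "hat X = Inl ` X \<union> Inr ` X"

definition regular_on :: "'s set \<Rightarrow> 's list set \<Rightarrow> bool" where
  "regular_on Sig R \<longleftrightarrow> finite Sig \<and>
     (\<exists>(Q::nat set) q0 F \<delta>. finite Q \<and> q0 \<in> Q \<and> F \<subseteq> Q \<and>
        (\<forall>q\<in>Q. \<forall>a\<in>Sig. \<delta> q a \<in> Q) \<and>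
        R = {w \<in> lists Sig. fold (\<lambda>a q. \<delta> q a) w q0 \<in> F})"

text \<open>Elements of M^0(S;I,J;P): Some (i,s,j), and None is the zero.
  Sandwich matrix P j i :: 'a option, None meaning the entry 0.
  With flag z = False we get M(S;I,J;P) (P must have no zero entries, no zero element).\<close>

definition rees_mult :: "('a, 'm) monoid_scheme \<Rightarrow> ('j \<Rightarrow> 'i \<Rightarrow> 'a option)
    \<Rightarrow> ('i \<times> 'a \<times> 'j) option \<Rightarrow> ('i \<times> 'a \<times> 'j) option \<Rightarrow> ('i \<times> 'a \<times> 'j) option" where
  "rees_mult S P a b = (case (a, b) of
      (Some (i1, g1, j1), Some (i2, g2, j2)) \<Rightarrow>
        (case P j1 i2 of None \<Rightarrow> None
         | Some p \<Rightarrow> Some (i1, g1 \<otimes>\<^bsub>S\<^esub> p \<otimes>\<^bsub>S\<^esub> g2, j2))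
    | _ \<Rightarrow> None)"

definition rees_carrier :: "bool \<Rightarrow> 'i set \<Rightarrow> ('a, 'm) monoid_scheme \<Rightarrow> 'j set
    \<Rightarrow> ('i \<times> 'a \<times> 'j) option set" where
  "rees_carrier z I S J = Some ` (I \<times> carrier S \<times> J) \<union> (if z then {None} else {})"

end

theory Submission
  imports Defs
begin

lemma sgen_mono: "x \<in> sgen mul A \<Longrightarrow> A \<subseteq> B \<Longrightarrow> x \<in> sgen mul B"
proof (induction rule: sgen.induct)
  case (base a)
  then have "a \<in> B" by blast
  then show ?case by (rule sgen.base)
next
  case (step a b)
  then show ?case by (simp add: sgen.step)
qed

lemma sgen_sub: "x \<in> sgen mul A \<Longrightarrow> A \<subseteq> C \<Longrightarrow> (\<And>a b. a \<in> C \<Longrightarrow> b \<in> C \<Longrightarrow> mul a b \<in> C) \<Longrightarrow> x \<in> C"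
  by (induction rule: sgen.induct) auto

lemma sgen_between:
  assumes "sgen mul A = C" "A \<subseteq> T" "T \<subseteq> C"
  shows "sgen mul T = C"
proof
  show "sgen mul T \<subseteq> C"
  proof
    fix x assume "x \<in> sgen mul T"
    then show "x \<in> C"
    proof (rule sgen_sub)
      show "T \<subseteq> C" by (rule assms(3))
      fix a b assume "a \<in> C" "b \<in> C"
      then have "a \<in> sgen mul A" "b \<in> sgen mul A" using assms(1) by auto
      then have "mul a b \<in> sgen mul A" by (rule sgen.step)
      then show "mul a b \<in> C" using assms(1) by simp
    qed
  qed
  show "C \<subseteq> sgen mul T"
  proof
    fix x assume "x \<in> C"
    then have "x \<in> sgen mul A" using assms(1) by simp
    then show "x \<in> sgen mul T" using assms(2) by (rule sgen_mono)
  qed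
qed

lemma fold_const0: "fold (\<lambda>a q. (0::nat)) w 0 = 0"
  by (induction w) auto

lemma (in monoid) main:
  fixes I :: "'i set" and J :: "'j set"
    and P :: "'j \<Rightarrow> 'i \<Rightarrow> 'a option"
    and z :: bool
  assumes "\<forall>j\<in>J. \<forall>i\<in>I. P j i \<in> Some ` carrier G \<union> {None}"
    and "fin_gen (rees_carrier z I G J) (rees_mult G P)"
    and "\<exists>j\<in>J. \<exists>i\<in>I. \<exists>u. P j i = Some u \<and> u \<in> Units G"
  shows "\<exists>X \<sigma> Y \<tau> R.
           fin_choice (carrier G) (mult G) X \<sigma> \<and>
           fin_choice (rees_carrier z I G J) (rees_mult G P) Y \<tau> \<and>
           regular_on (hat X) R \<and>
           loop_problem (carrier G) (mult G) X \<sigma>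
             = loop_problem (rees_carrier z I G J) (rees_mult G P) Y \<tau> \<inter> R"
proof -
  obtain j0 i0 u where j0: "j0 \<in> J" and i0: "i0 \<in> I" and Pu: "P j0 i0 = Some u"
    and uU: "u \<in> Units G" using assms(3) by blast
  have uc: "u \<in> carrier G" and iuc: "inv u \<in> carrier G" and uiu: "u \<otimes> inv u = \<one>"
    and iuu: "inv u \<otimes> u = \<one>" using uU by auto
  have Pc: "p \<in> carrier G" if "j \<in> J" "i \<in> I" "P j i = Some p" for j i p
  proof -
    have "P j i \<in> Some ` carrier G \<union> {None}" using assms(1) that(1,2) by blast
    then show ?thesis using that(3) by auto
  qed
  define M where "M = rees_carrier z I G J"
  define mulM where "mulM = rees_mult G P"
  obtain A where finA: "finite A" and AM: "A \<subseteq> M" and genA: "sgen mulM A = M"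
    using assms(2) unfolding fin_gen_def M_def mulM_def by blast
  have Msome: "Some (i, s, j) \<in> M \<longleftrightarrow> i \<in> I \<and> s \<in> carrier G \<and> j \<in> J" for i s j
    unfolding M_def rees_carrier_def by auto
  define IA where "IA = {i. \<exists>s j. Some (i, s, j) \<in> A}"
  define JA where "JA = {j. \<exists>i s. Some (i, s, j) \<in> A}"
  define MA where "MA = {s. \<exists>i j. Some (i, s, j) \<in> A}"
  define PA where "PA = {p. \<exists>j\<in>JA. \<exists>i\<in>IA. P j i = Some p}"
  define B where "B = MA \<union> PA \<union> {u}"
  have "IA \<subseteq> (\<lambda>x. fst (the x)) ` A" unfolding IA_def by force
  then have finIA: "finite IA" using finA finite_surj by blast
  have "JA \<subseteq> (\<lambda>x. snd (snd (the x))) ` A" unfolding JA_def by force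
  then have finJA: "finite JA" using finA finite_surj by blast
  have "MA \<subseteq> (\<lambda>x. fst (snd (the x))) ` A" unfolding MA_def by force
  then have finMA: "finite MA" using finA finite_surj by blast
  have "PA \<subseteq> the ` ((\<lambda>(j, i). P j i) ` (JA \<times> IA))"
  proof
    fix p assume "p \<in> PA"
    then obtain j i where ji: "j \<in> JA" "i \<in> IA" "P j i = Some p" unfolding PA_def by blast
    then have "P j i \<in> (\<lambda>(j, i). P j i) ` (JA \<times> IA)" by force
    then show "p \<in> the ` ((\<lambda>(j, i). P j i) ` (JA \<times> IA))" using ji(3) by (metis image_eqI option.sel)
  qed
  then have finPA: "finite PA" by (rule finite_subset) (use finIA finJA in auto)
  have finB: "finite B" unfolding B_def using finMA finPA by auto
  have IAI: "IA \<subseteq> I" and JAJ: "JA \<subseteq> J" and MAc: "MA \<subseteq> carrier G"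
    using AM Msome unfolding IA_def JA_def MA_def by blast+
  have PAc: "PA \<subseteq> carrier G" using IAI JAJ Pc unfolding PA_def by blast
  have Bc: "B \<subseteq> carrier G" unfolding B_def using MAc PAc uc by blast
  have gen: "y = Some (i, s, j) \<Longrightarrow> i \<in> IA \<and> j \<in> JA \<and> s \<in> sgen (mult G) B"
    if "y \<in> sgen mulM A" for y i s j
    using that
  proof (induction arbitrary: i s j rule: sgen.induct)
    case (base a)
    then have "s \<in> B" unfolding MA_def B_def by blast
    then have "s \<in> sgen (mult G) B" by (rule sgen.base)
    then show ?case using base unfolding IA_def JA_def by blast
  next
    case (step a b)
    from step.prems obtain i1 g1 j1 i2 g2 j2 p where a: "a = Some (i1, g1, j1)"
      and b: "b = Some (i2, g2, j2)" and p: "P j1 i2 = Some p"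
      and eq: "i = i1" "s = g1 \<otimes> p \<otimes> g2" "j = j2"
      unfolding mulM_def rees_mult_def
      by (auto split: option.splits prod.splits)
    from step.IH(1)[OF a] step.IH(2)[OF b] have
      h: "i1 \<in> IA" "j1 \<in> JA" "g1 \<in> sgen (mult G) B" "i2 \<in> IA" "j2 \<in> JA" "g2 \<in> sgen (mult G) B"
      by auto
    have "p \<in> B" using h p unfolding B_def PA_def by blast
    then have "p \<in> sgen (mult G) B" by (rule sgen.base)
    then have "g1 \<otimes> p \<in> sgen (mult G) B" using h(3) by (simp add: sgen.step)
    then have "g1 \<otimes> p \<otimes> g2 \<in> sgen (mult G) B" using h(6) by (simp add: sgen.step)
    then show ?case using h eq by simp
  qed
  have genS: "sgen (mult G) B = carrier G"
  proof
    show "sgen (mult G) B \<subseteq> carrier G"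
      using sgen_sub[of _ "mult G" B "carrier G"] Bc by auto
    show "carrier G \<subseteq> sgen (mult G) B"
    proof
      fix s assume s: "s \<in> carrier G"
      have "Some (i0, s \<otimes> inv u, j0) \<in> sgen mulM A"
        using genA Msome i0 j0 s iuc by auto
      then have "s \<otimes> inv u \<in> sgen (mult G) B" using gen by blast
      moreover have "u \<in> sgen (mult G) B" by (rule sgen.base) (simp add: B_def)
      ultimately have "s \<otimes> inv u \<otimes> u \<in> sgen (mult G) B" by (rule sgen.step)
      also have "s \<otimes> inv u \<otimes> u = s" using s iuc uc iuu by (simp add: m_assoc)
      finally show "s \<in> sgen (mult G) B" .
    qed
  qed
  obtain h where h: "bij_betw h {0..<card B} B" using ex_bij_betw_nat_finite finB by blast
  obtain g where g: "bij_betw g {0..<card A} A" using ex_bij_betw_nat_finite finA by blast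
  define n where "n = card B"
  define m where "m = card A"
  define X where "X = {0..<n}"
  define \<phi> where "\<phi> s = Some (i0, s \<otimes> inv u, j0)" for s
  define \<tau> where "\<tau> k = (if k < n then \<phi> (h k) else g (k - n))" for k
  define Y where "Y = {0..<n+m}"
  have hX: "h ` X = B" using h unfolding X_def n_def bij_betw_def by auto
  have gA: "g ` {0..<m} = A" using g unfolding m_def bij_betw_def by auto
  have phiM: "s \<in> carrier G \<Longrightarrow> \<phi> s \<in> M" for s using Msome i0 j0 iuc unfolding \<phi>_def by auto
  have hc: "x \<in> X \<Longrightarrow> h x \<in> carrier G" for x using hX Bc by blast
  have tauX: "x \<in> X \<Longrightarrow> \<tau> x = \<phi> (h x)" for x unfolding \<tau>_def X_def by auto
  have XY: "X \<subseteq> Y" unfolding X_def Y_def by auto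
  have fcS: "fin_choice (carrier G) (mult G) X h"
    unfolding fin_choice_def using hX Bc genS X_def by auto
  have tY1: "\<tau> ` Y \<subseteq> M"
  proof
    fix y assume "y \<in> \<tau> ` Y"
    then obtain k where k: "k < n + m" "y = \<tau> k" unfolding Y_def by auto
    show "y \<in> M"
    proof (cases "k < n")
      case True
      then have "h k \<in> carrier G" using hc X_def by auto
      then show ?thesis using k True phiM \<tau>_def by auto
    next
      case False
      then have "g (k - n) \<in> A" using gA k by auto
      then show ?thesis using k False AM \<tau>_def by auto
    qed
  qed
  have tY2: "A \<subseteq> \<tau> ` Y"
  proof
    fix a assume "a \<in> A"
    then obtain k where k: "k < m" "a = g k" using gA by force
    then have "\<tau> (n + k) = a" unfolding \<tau>_def by auto
    moreover have "n + k \<in> Y" using k Y_def by auto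
    ultimately show "a \<in> \<tau> ` Y" by blast
  qed
  have fcM: "fin_choice M mulM Y \<tau>"
    unfolding fin_choice_def using tY1 tY2 sgen_between[OF genA tY2 tY1] Y_def by auto
  define R where "R = lists (hat X)"
  have reg: "regular_on (hat X) R"
    unfolding regular_on_def R_def
  proof (intro conjI exI[of _ "{0::nat}"] exI[of _ 0] exI[of _ "{0::nat}"] exI[of _ "\<lambda>q a. 0"])
    show "finite (hat X)" unfolding hat_def X_def by auto
  qed (auto simp: fold_const0)
  have mulphi: "\<phi> (s \<otimes> t) = mulM (\<phi> s) (\<phi> t)" if "s \<in> carrier G" "t \<in> carrier G" for s t
  proof -
    have "s \<otimes> inv u \<otimes> u \<otimes> (t \<otimes> inv u) = s \<otimes> (inv u \<otimes> u) \<otimes> (t \<otimes> inv u)"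
      using that uc iuc by (simp add: m_assoc)
    also have "\<dots> = s \<otimes> t \<otimes> inv u" using that uc iuc iuu by (simp add: m_assoc)
    finally show ?thesis unfolding \<phi>_def mulM_def rees_mult_def using Pu by simp
  qed
  have eqm: "map_option \<phi> (mult1 (mult G) a (h x)) = mult1 mulM (map_option \<phi> a) (\<tau> x)"
    if xX: "x \<in> X" and va: "a \<in> vert (carrier G)" for a x
  proof (cases a)
    case None then show ?thesis by (simp add: mult1_def tauX[OF xX])
  next
    case (Some s)
    then have "s \<in> carrier G" using va unfolding vert_def by auto
    then show ?thesis using Some by (simp add: mult1_def tauX[OF xX] mulphi hc[OF xX])
  qed
  have vM: "map_option \<phi> a \<in> vert M" if "a \<in> vert (carrier G)" for a
    using that phiM unfolding vert_def by auto
  have d1: "lpath M mulM Y \<tau> (map_option \<phi> a) w (map_option \<phi> b) \<and> w \<in> lists (hat X)"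
    if "lpath (carrier G) (mult G) X h a w b" for a w b
    using that
  proof (induction rule: lpath.induct)
    case (nil a)
    then show ?case using vM[OF nil.hyps] by (simp add: lpath.nil)
  next
    case (fwd x a w b)
    have xY: "x \<in> Y" using fwd.hyps(1) XY by blast
    have "lpath M mulM Y \<tau> (mult1 mulM (map_option \<phi> a) (\<tau> x)) w (map_option \<phi> b)"
      using fwd.IH eqm[OF fwd.hyps(1) fwd.hyps(2)] by simp
    then have "lpath M mulM Y \<tau> (map_option \<phi> a) (Inl x # w) (map_option \<phi> b)"
      by (rule lpath.fwd[OF xY vM[OF fwd.hyps(2)]])
    moreover have "Inl x # w \<in> lists (hat X)" using fwd.IH fwd.hyps(1) by (simp add: hat_def)
    ultimately show ?case by blast
  next
    case (bwd x a w b)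
    have xY: "x \<in> Y" using bwd.hyps(1) XY by blast
    have "lpath M mulM Y \<tau> (map_option \<phi> a) w (map_option \<phi> b)"
      using bwd.IH by simp
    then have "lpath M mulM Y \<tau> (mult1 mulM (map_option \<phi> a) (\<tau> x)) (Inr x # w) (map_option \<phi> b)"
      by (rule lpath.bwd[OF xY vM[OF bwd.hyps(2)]])
    then have "lpath M mulM Y \<tau> (map_option \<phi> (mult1 (mult G) a (h x))) (Inr x # w) (map_option \<phi> b)"
      using eqm[OF bwd.hyps(1) bwd.hyps(2)] by simp
    moreover have "Inr x # w \<in> lists (hat X)" using bwd.IH bwd.hyps(1) by (simp add: hat_def)
    ultimately show ?case by blast
  qed
  define good :: "('i \<times> 'a \<times> 'j) option option \<Rightarrow> bool" where "good a \<longleftrightarrow> a = None \<or>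
      (\<exists>t j p. a = Some (Some (i0, t, j)) \<and> t \<in> carrier G \<and> j \<in> J \<and> P j i0 = Some p)" for a
  define val :: "('i \<times> 'a \<times> 'j) option option \<Rightarrow> 'a option" where "val a = (case a of None \<Rightarrow> None | Some None \<Rightarrow> None
      | Some (Some (i, t, j)) \<Rightarrow> Some (t \<otimes> the (P j i0)))" for a
  have goodv: "good a \<Longrightarrow> val a \<in> vert (carrier G)" for a
    unfolding good_def val_def vert_def using Pc i0 by auto
  have step1: "good (mult1 mulM a (\<tau> x)) \<and> val (mult1 mulM a (\<tau> x)) = mult1 (mult G) (val a) (h x)"
    if "good a" "x \<in> X" for a x
  proof -
    note ga = that(1)
    have hx: "h x \<in> carrier G" using hc that by auto
    have t: "\<tau> x = Some (i0, h x \<otimes> inv u, j0)" using tauX that \<phi>_def by auto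
    have e1: "h x \<otimes> inv u \<otimes> u = h x" using hx uc iuc iuu by (simp add: m_assoc)
    show ?thesis
    proof (cases "a = None")
      case True
      then have "mult1 mulM a (\<tau> x) = Some (Some (i0, h x \<otimes> inv u, j0))" using t by (simp add: mult1_def)
      then show ?thesis using True Pu e1 hx iuc j0 by (simp add: good_def val_def mult1_def)
    next
      case False
      then obtain t' j p where a: "a = Some (Some (i0, t', j))" and tc: "t' \<in> carrier G"
        and j: "j \<in> J" and p: "P j i0 = Some p" using ga False unfolding good_def by blast
      have pc: "p \<in> carrier G" using Pc j i0 p by auto
      have e2: "t' \<otimes> p \<otimes> (h x \<otimes> inv u) \<otimes> u = t' \<otimes> p \<otimes> h x"
        using hx uc iuc iuu tc pc by (simp add: m_assoc)
      have "mult1 mulM a (\<tau> x) = Some (Some (i0, t' \<otimes> p \<otimes> (h x \<otimes> inv u), j0))"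
        using a t p by (simp add: mult1_def mulM_def rees_mult_def)
      then show ?thesis using a Pu p e2 tc pc hx iuc j0 by (simp add: good_def val_def mult1_def)
    qed
  qed
  have bstep: "good a" if "a \<in> vert M" "good (mult1 mulM a (\<tau> x))" "x \<in> X" for a x
  proof -
    have t: "\<tau> x = Some (i0, h x \<otimes> inv u, j0)" using tauX that \<phi>_def by auto
    show ?thesis
    proof (cases a)
      case None then show ?thesis using good_def by auto
    next
      case (Some a')
      show ?thesis
      proof (cases a')
        case None
        then show ?thesis using that(2) Some unfolding good_def mult1_def mulM_def rees_mult_def
          by auto
      next
        case (Some b)
        then obtain i t' j where b: "b = (i, t', j)" by (cases b) auto
        have mem: "i \<in> I" "t' \<in> carrier G" "j \<in> J"
          using that(1) \<open>a = Some a'\<close> Some b Msome unfolding vert_def by auto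
        show ?thesis
        proof (cases "P j i0")
          case None
          then show ?thesis using that(2) \<open>a = Some a'\<close> Some b t
            unfolding good_def mult1_def mulM_def rees_mult_def by auto
        next
          case (Some p)
          then have "i = i0" using that(2) \<open>a = Some a'\<close> \<open>a' = Some b\<close> b t
            unfolding good_def mult1_def mulM_def rees_mult_def by auto
          then show ?thesis using \<open>a = Some a'\<close> \<open>a' = Some b\<close> b mem Some
            unfolding good_def by auto
        qed
      qed
    qed
  qed
  have d2: "good a \<Longrightarrow> w \<in> lists (hat X) \<Longrightarrow> good b \<and> lpath (carrier G) (mult G) X h (val a) w (val b)"
    if "lpath M mulM Y \<tau> a w b" for a w b
    using that
  proof (induction rule: lpath.induct)
    case (nil a)
    then show ?case using goodv[OF nil.prems(1)] by (simp add: lpath.nil)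
  next
    case (fwd x a w b)
    have xX: "x \<in> X" using fwd.prems(2) unfolding hat_def by auto
    have "w \<in> lists (hat X)" using fwd.prems(2) by auto
    moreover have s1: "good (mult1 mulM a (\<tau> x))"
      and s2: "val (mult1 mulM a (\<tau> x)) = mult1 (mult G) (val a) (h x)"
      using step1[OF fwd.prems(1) xX] by (rule conjunct1, rule conjunct2)
    ultimately have ih: "good b \<and> lpath (carrier G) (mult G) X h (val (mult1 mulM a (\<tau> x))) w (val b)"
      using fwd.IH[OF s1] by blast
    then have "lpath (carrier G) (mult G) X h (mult1 (mult G) (val a) (h x)) w (val b)"
      using s2 by simp
    then have "lpath (carrier G) (mult G) X h (val a) (Inl x # w) (val b)"
      by (rule lpath.fwd[OF xX goodv[OF fwd.prems(1)]])
    then show ?case using ih by blast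
  next
    case (bwd x a w b)
    have xX: "x \<in> X" using bwd.prems(2) unfolding hat_def by auto
    have ga: "good a" by (rule bstep[OF bwd.hyps(2) bwd.prems(1) xX])
    have "w \<in> lists (hat X)" using bwd.prems(2) by auto
    then have ih: "good b \<and> lpath (carrier G) (mult G) X h (val a) w (val b)"
      using bwd.IH[OF ga] by blast
    have "val (mult1 mulM a (\<tau> x)) = mult1 (mult G) (val a) (h x)" using step1[OF ga xX] by (rule conjunct2)
    moreover have "lpath (carrier G) (mult G) X h (val a) w (val b)" using ih by (rule conjunct2)
    then have "lpath (carrier G) (mult G) X h (mult1 (mult G) (val a) (h x)) (Inr x # w) (val b)"
      by (rule lpath.bwd[OF xX goodv[OF ga]])
    ultimately show ?case using ih by simp
  qed
  have lang: "loop_problem (carrier G) (mult G) X h = loop_problem M mulM Y \<tau> \<inter> R"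
  proof
    show "loop_problem (carrier G) (mult G) X h \<subseteq> loop_problem M mulM Y \<tau> \<inter> R"
    proof
      fix w assume "w \<in> loop_problem (carrier G) (mult G) X h"
      then have "lpath (carrier G) (mult G) X h None w None" unfolding loop_problem_def by simp
      from d1[OF this] have "lpath M mulM Y \<tau> None w None" "w \<in> lists (hat X)" by simp_all
      then show "w \<in> loop_problem M mulM Y \<tau> \<inter> R" unfolding loop_problem_def R_def by simp
    qed
    show "loop_problem M mulM Y \<tau> \<inter> R \<subseteq> loop_problem (carrier G) (mult G) X h"
    proof
      fix w assume "w \<in> loop_problem M mulM Y \<tau> \<inter> R"
      then have "lpath M mulM Y \<tau> None w None" "w \<in> lists (hat X)"
        unfolding loop_problem_def R_def by auto
      moreover have "good None" unfolding good_def by simp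
      ultimately have "lpath (carrier G) (mult G) X h (val None) w (val None)"
        using d2 by blast
      then show "w \<in> loop_problem (carrier G) (mult G) X h"
        unfolding loop_problem_def val_def by simp
    qed
  qed
  show ?thesis unfolding M_def[symmetric] mulM_def[symmetric] using fcS fcM reg lang
    by (intro exI[of _ X] exI[of _ h] exI[of _ Y] exI[of _ \<tau>] exI[of _ R] conjI)
qed


theorem theorem5p3:
  fixes S :: "('a, 'm) monoid_scheme"
    and I :: "'i set" and J :: "'j set"
    and P :: "'j \<Rightarrow> 'i \<Rightarrow> 'a option"
    and z :: bool
  assumes "monoid S"
    and "\<forall>j\<in>J. \<forall>i\<in>I. P j i \<in> Some ` carrier S \<union> {None}"
    and "\<not> z \<longrightarrow> (\<forall>j\<in>J. \<forall>i\<in>I. P j i \<noteq> None)"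
    and "fin_gen (rees_carrier z I S J) (rees_mult S P)"
    and "\<exists>j\<in>J. \<exists>i\<in>I. \<exists>u. P j i = Some u \<and> u \<in> Units S"
  shows "\<exists>X \<sigma> Y \<tau> R.
           fin_choice (carrier S) (mult S) X \<sigma> \<and>
           fin_choice (rees_carrier z I S J) (rees_mult S P) Y \<tau> \<and>
           regular_on (hat X) R \<and>
           loop_problem (carrier S) (mult S) X \<sigma>
             = loop_problem (rees_carrier z I S J) (rees_mult S P) Y \<tau> \<inter> R"
  using monoid.main[OF assms(1) assms(2) assms(4) assms(5)] .

end
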